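(* Let $\alpha\in(0,1)$. The equation $1/\alpha+(1+1/\alpha)z-z^{2-\alpha/2}=0$ has a unique positive root $z=r^*=r^*(\alpha)$, and $$\mathrm{g}(x,y,\alpha):=\frac{2+2(1+\alpha)x-\alpha x^{2-\alpha/2}}{1+x}-\frac{\alpha y^{2-\alpha/2}}{1+y}>0\qquad\text{for all } 0\le x,y<r^*.$$ *)

theory Defs
  imports Complex_Main
begin

definition rstar_eq :: "real \<Rightarrow> real \<Rightarrow> real" where
  "rstar_eq \<alpha> z = 1/\<alpha> + (1 + 1/\<alpha>) * z - z powr (2 - \<alpha>/2)"

definition g :: "real \<Rightarrow> real \<Rightarrow> real \<Rightarrow> real" where
  "g x y \<alpha> = (2 + 2*(1+\<alpha>)*x - \<alpha> * x powr (2 - \<alpha>/2)) / (1 + x)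
              - \<alpha> * y powr (2 - \<alpha>/2) / (1 + y)"

end

theory Submission
  imports Defs
begin

lemma powr_le_lin:
  fixes x r p :: real
  assumes "0 \<le> x" "x \<le> r" "0 < r" "1 \<le> p"
  shows "x powr p \<le> (x/r) * r powr p"
proof -
  define t where "t = x / r"
  have t0: "0 \<le> t" and t1: "t \<le> 1" using assms by (auto simp: t_def)
  have x: "x = t * r" using assms by (simp add: t_def)
  have "x powr p = t powr p * r powr p" using x t0 assms by (simp add: powr_mult)
  moreover have "t powr p \<le> t"
  proof (cases "t = 0")
    case False
    then have "t powr p \<le> t powr 1" using t0 t1 assms by (intro powr_mono') auto
    then show ?thesis using t0 by simp
  qed simp
  ultimately show ?thesis unfolding t_def[symmetric]
    by (simp add: mult_right_mono)
qed

lemma f_pos: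
  fixes a r y :: real
  assumes a: "0 < a" "a < 1" and r: "0 < r" "rstar_eq a r = 0" and y: "0 \<le> y" "y < r"
  shows "rstar_eq a y > 0"
proof -
  define t where "t = y / r"
  have t0: "0 \<le> t" and t1: "t < 1" using r y by (auto simp: t_def)
  have yy: "y = t * r" using r by (simp add: t_def)
  have p: "y powr (2 - a/2) \<le> t * r powr (2 - a/2)"
    using powr_le_lin[of y r "2 - a/2"] a r y by (simp add: t_def)
  have rr: "r powr (2 - a/2) = 1/a + (1+1/a)*r" using r unfolding rstar_eq_def by simp
  have A: "rstar_eq a y \<ge> 1/a + (1+1/a)*(t*r) - t * r powr (2 - a/2)"
    unfolding rstar_eq_def using p yy by simp
  have B0: "1/a + (1+1/a)*(t*r) - t * r powr (2 - a/2) = 1/a + (1+1/a)*(t*r) - t * (1/a + (1+1/a)*r)"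
    by (simp only: rr)
  have B1: "1/a + (1+1/a)*(t*r) - t * (1/a + (1+1/a)*r) = (1 - t) / a" using a by (simp add: field_simps)
  have B: "1/a + (1+1/a)*(t*r) - t * r powr (2 - a/2) = (1 - t) / a" using B0 B1 by simp
  have C: "(1 - t) / a > 0" using t1 a by simp
  show ?thesis using A B C by linarith
qed

lemma fM_aux:
  fixes M a :: real
  assumes h: "M powr (2 - a/2) \<ge> M * (2 + 2/a)" "M \<ge> 1" "0 < a" "a < 1"
  shows "rstar_eq a M \<le> 0"
proof -
  define P where "P = M powr (2 - a/2)"
  have h1: "P \<ge> M * (2 + 2/a)" using h(1) by (simp add: P_def)
  have e1: "M * (2 + 2/a) = 2*M + 2*(M/a)" by (simp add: algebra_simps)
  have e2: "(1 + 1/a)*M = M + M/a" by (simp add: algebra_simps)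
  have e3: "1/a \<le> M/a" using h by (simp add: divide_right_mono)
  have lin: "\<And>P M q i::real. P \<ge> 2*M + 2*q \<Longrightarrow> i \<le> q \<Longrightarrow> M \<ge> 1 \<Longrightarrow> i + (M + q) - P \<le> 0"
    by linarith
  have "1/a + (M + M/a) - P \<le> 0" using lin[of "2*M + 2*(M/a)" P "M/a" "1/a"] h1 e1 e3 h(2) by simp
  then have "1/a + (1 + 1/a)*M - P \<le> 0" using e2 by simp
  then show ?thesis unfolding rstar_eq_def P_def .
qed

lemma root_exists:
  fixes a :: real
  assumes a: "0 < a" "a < 1"
  shows "\<exists>r. r > 0 \<and> rstar_eq a r = 0"
proof -
  define M where "M = (2 + 2/a)^2"
  have c: "2 + 2/a \<ge> 1" using a by simp
  have M1: "M \<ge> 1" unfolding M_def using c by (simp add: one_le_power)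
  have sq: "sqrt M = 2 + 2/a" unfolding M_def using c by simp
  have "M powr (2 - a/2) \<ge> M powr (3/2)" using M1 a by (intro powr_mono) auto
  moreover have "M powr (3/2) = M * sqrt M"
  proof -
    have "M powr (3/2) = M powr (1 + 1/2)" by simp
    also have "\<dots> = M powr 1 * M powr (1/2)" by (rule powr_add)
    also have "\<dots> = M * sqrt M" using M1 by (simp add: powr_half_sqrt)
    finally show ?thesis .
  qed
  ultimately have "M powr (2 - a/2) \<ge> M * (2 + 2/a)" using sq by simp
  then have fM: "rstar_eq a M \<le> 0" using M1 a by (rule fM_aux)
  have f1: "rstar_eq a 1 \<ge> 0" unfolding rstar_eq_def using a by simp
  have cont: "continuous_on {1..M} (rstar_eq a)"
    unfolding rstar_eq_def by (intro continuous_intros) auto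
  obtain r where "r \<in> {1..M}" "rstar_eq a r = 0"
    using IVT2'[of "rstar_eq a" M 0 1] fM f1 M1 cont by auto
  then show ?thesis by (intro exI[of _ r]) auto
qed

theorem lemma2p1:
  fixes \<alpha> :: real
  assumes "0 < \<alpha>" and "\<alpha> < 1"
  shows "(\<exists>!r. r > 0 \<and> rstar_eq \<alpha> r = 0) \<and>
         (\<forall>x y. 0 \<le> x \<and> x < (THE r. r > 0 \<and> rstar_eq \<alpha> r = 0) \<and>
                 0 \<le> y \<and> y < (THE r. r > 0 \<and> rstar_eq \<alpha> r = 0) \<longrightarrow> g x y \<alpha> > 0)"
proof -
  let ?a = \<alpha>
  obtain r where r: "r > 0" "rstar_eq ?a r = 0" using root_exists assms by blast
  have uniq: "\<And>s. s > 0 \<Longrightarrow> rstar_eq ?a s = 0 \<Longrightarrow> s = r"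
  proof -
    fix s assume s: "s > 0" "rstar_eq ?a s = 0"
    show "s = r"
    proof (rule ccontr)
      assume "s \<noteq> r"
      then consider "s < r" | "r < s" by linarith
      then show False
      proof cases
        case 1 then show False using f_pos[OF assms r, of s] s by simp
      next
        case 2 then show False using f_pos[OF assms s, of r] r by simp
      qed
    qed
  qed
  have ex1: "\<exists>!r. r > 0 \<and> rstar_eq ?a r = 0"
  proof (rule ex1I[of _ r])
    show "r > 0 \<and> rstar_eq ?a r = 0" using r by simp
  next
    fix s assume "s > 0 \<and> rstar_eq ?a s = 0"
    then show "s = r" using uniq by simp
  qed
  have the: "(THE r. r > 0 \<and> rstar_eq ?a r = 0) = r"
  proof (rule the_equality)
    show "r > 0 \<and> rstar_eq ?a r = 0" using r by simp
  next
    fix s assume "s > 0 \<and> rstar_eq ?a s = 0"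
    then show "s = r" using uniq by simp
  qed
  define p where "p = 2 - ?a/2"
  have p1: "1 \<le> p" using assms by (simp add: p_def)
  have rr0: "r powr p = 1/?a + (1+1/?a)*r"
    using r unfolding rstar_eq_def p_def by linarith
  have rr: "?a * r powr p = 1 + (1+?a)*r"
    unfolding rr0 using assms by (simp add: field_simps)
  define h where "h = (1 + (1+?a)*r) / (1+r)"
  have main: "g x y ?a > 0" if x: "0 \<le> x" "x < r" and y: "0 \<le> y" "y < r" for x y
  proof -
    have fy: "rstar_eq ?a y > 0" using f_pos[OF assms r y] .
    have By0: "y powr p < 1/?a + (1+1/?a)*y"
      using fy unfolding rstar_eq_def p_def by linarith
    have "?a * y powr p < ?a * (1/?a + (1+1/?a)*y)"
      using By0 assms by (simp only: mult_strict_left_mono)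
    also have "?a * (1/?a + (1+1/?a)*y) = 1 + (1+?a)*y" using assms by (simp add: field_simps)
    finally have By: "?a * y powr p < 1 + (1+?a)*y" .
    have "?a * y powr p / (1+y) < (1 + (1+?a)*y) / (1+y)"
      using By y by (intro divide_strict_right_mono) auto
    also have "\<dots> \<le> h" unfolding h_def using y r assms
      by (simp add: divide_simps algebra_simps mult_left_mono)
    finally have B: "?a * y powr p / (1+y) < h" .
    define t where "t = x / r"
    have t0: "0 \<le> t" and t1: "t \<le> 1" using r x by (auto simp: t_def)
    have xx: "x = t * r" using r by (simp add: t_def)
    have px: "x powr p \<le> t * r powr p" using powr_le_lin[of x r p] x r p1 by (simp add: t_def)
    have "?a * x powr p \<le> ?a * (t * r powr p)" using px assms by (simp add: mult_left_mono)
    also have "\<dots> = t * (?a * r powr p)" by (simp only: mult.left_commute)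
    also have "\<dots> = t * (1 + (1+?a)*r)" by (simp only: rr)
    finally have "?a * x powr p \<le> t * (1 + (1+?a)*r)" .
    then have "2 + 2*(1+?a)*x - ?a * x powr p \<ge> 2 + 2*(1+?a)*(t*r) - t * (1 + (1+?a)*r)"
      using xx by simp
    moreover have "(2 + 2*(1+?a)*(t*r) - t * (1 + (1+?a)*r)) * (1+r) - (1 + (1+?a)*r)*(1+x)
        = (1-t)*(1+(1-?a)*r)" using xx by (simp add: algebra_simps)
    moreover have "(1-t)*(1+(1-?a)*r) \<ge> 0" using t1 assms r by simp
    ultimately have "(2 + 2*(1+?a)*x - ?a * x powr p) * (1+r) \<ge> (1 + (1+?a)*r)*(1+x)"
      using r mult_right_mono[of "2 + 2*(1+?a)*(t*r) - t * (1 + (1+?a)*r)" "2 + 2*(1+?a)*x - ?a * x powr p" "1+r"]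
      by linarith
    then have A: "(2 + 2*(1+?a)*x - ?a * x powr p) / (1+x) \<ge> h"
      unfolding h_def using x r by (simp add: pos_le_divide_eq pos_divide_le_eq mult.commute)
    show ?thesis using A B unfolding g_def p_def[symmetric] by linarith
  qed
  show ?thesis using ex1 main unfolding the by blast
qed

end
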